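(* Let $f:\mathbb{R}^n\to\mathbb{R}\cup\{+\infty\}$ and $g:\mathbb{R}^m\to\mathbb{R}\cup\{+\infty\}$ be proper, closed, convex functions, and let $A\in\mathbb{R}^{p\times n}$, $B\in\mathbb{R}^{p\times m}$, $c\in\mathbb{R}^p$. Consider the problem $$\min_{x\in\mathbb{R}^n,\,z\in\mathbb{R}^m} f(x)+g(z)\quad\text{subject to}\quad Ax+Bz=c,$$ and assume that the Lagrangian $\mathcal{L}_0(x,z,y)=f(x)+g(z)+y^T(Ax+Bz-c)$ has a saddle point (the min-max and max-min of $\mathcal{L}_0$ over $(x,z)\in\mathbb{R}^n\times\mathbb{R}^m$, $y\in\mathbb{R}^p$ coincide and are attained). Let $$M_0=\begin{pmatrix}0 & 0 & A^T\\ 0 & 0 & B^T\\ -A & -B & 0_{p\times p}\end{pmatrix},$$ let $L>0$ satisfy $\|M_0\|_2\le L$, and let $\eta\in(0,\frac{1}{2L})$. For arbitrary initial points $x_0,x_{-1}\in\mathbb{R}^n$, $z_0,z_{-1}\in\mathbb{R}^m$, $y_0,y_{-1}\in\mathbb{R}^p$, define for $k=0,1,2,\dots$: $$\hat x_k=x_k-2\eta A^Ty_k+\eta A^Ty_{k-1},\qquad \hat z_k=z_k-2\eta B^Ty_k+\eta B^Ty_{k-1},$$ $$x_{k+1}=\arg\min_{u\in\mathbb{R}^n}\Big(\eta f(u)+\tfrac12\|u-\hat x_k\|_2^2\Big),\qquad z_{k+1}=\arg\min_{r\in\mathbb{R}^m}\Big(\eta g(r)+\tfrac12\|r-\hat z_k\|_2^2\Big),$$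 $$y_{k+1}=y_k+2\eta Ax_k+2\eta Bz_k-\eta Ax_{k-1}-\eta Bz_{k-1}-\eta c.$$ Then $\{x_k\}$ and $\{z_k\}$ converge, and their limit $(x^*,z^* )$ is a solution of the optimization problem.
   Context: $\|\cdot\|_2$ denotes the Euclidean norm on vectors and the spectral norm (largest singular value) on matrices. *)

theory Defs
  imports "HOL-Analysis.Analysis" "HOL-Library.Extended_Real"
begin

text \<open>Extended-real-valued functions R^n -> R \<union> {+inf}; values are ereal, -inf excluded by properness.\<close>

definition proper_fun :: "('a \<Rightarrow> ereal) \<Rightarrow> bool" where
  "proper_fun f \<longleftrightarrow> (\<forall>x. f x \<noteq> -\<infinity>) \<and> (\<exists>x. f x \<noteq> \<infinity>)"

definition ext_convex :: "('a::real_vector \<Rightarrow> ereal) \<Rightarrow> bool" where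
  "ext_convex f \<longleftrightarrow> (\<forall>x y t. 0 \<le> t \<and> t \<le> 1 \<longrightarrow>
      f ((1 - t) *\<^sub>R x + t *\<^sub>R y) \<le> ereal (1 - t) * f x + ereal t * f y)"

definition closed_fun :: "('a::topological_space \<Rightarrow> ereal) \<Rightarrow> bool" where
  "closed_fun f \<longleftrightarrow> closed {(x, r::real). f x \<le> ereal r}"

definition M0_map :: "real^'n^'p \<Rightarrow> real^'m^'p \<Rightarrow>
    ((real^'n) \<times> (real^'m) \<times> (real^'p)) \<Rightarrow> ((real^'n) \<times> (real^'m) \<times> (real^'p))" where
  "M0_map A B = (\<lambda>(x, z, y). (transpose A *v y, transpose B *v y, - (A *v x) - (B *v z)))"

definition lagrangian0 :: "(real^'n \<Rightarrow> ereal) \<Rightarrow> (real^'m \<Rightarrow> ereal) \<Rightarrow> real^'n^'p \<Rightarrow> real^'m^'p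
    \<Rightarrow> real^'p \<Rightarrow> real^'n \<Rightarrow> real^'m \<Rightarrow> real^'p \<Rightarrow> ereal" where
  "lagrangian0 f g A B c x z y = f x + g z + ereal (y \<bullet> (A *v x + B *v z - c))"

definition has_saddle_point :: "('a \<Rightarrow> 'b \<Rightarrow> ereal) \<Rightarrow> bool" where
  "has_saddle_point L \<longleftrightarrow> (\<exists>w\<^sub>0 y\<^sub>0. \<forall>w y. L w\<^sub>0 y \<le> L w\<^sub>0 y\<^sub>0 \<and> L w\<^sub>0 y\<^sub>0 \<le> L w y\<^sub>0)"

end

theory Submission
  imports Defs
begin

lemma fejer_step:
  fixes a b w S FS Fa Fb Fw :: "'a::real_inner"
  assumes hyp: "inner (b - \<eta> *\<^sub>R (2 *\<^sub>R Fb - Fa) - w) (S - w) \<le> \<eta> * inner FS (w - S)"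
    and mono: "inner (Fw - FS) (w - S) = 0"
    and lip: "norm (Fb - Fa) \<le> L * norm (b - a)"
    and eta: "\<eta> > 0" and L: "L > 0"
  shows "norm (w - S)^2 - 2*\<eta>*inner (Fw - Fb) (w - S) + \<eta>*L*norm (w - b)^2
           + (1 - 2*\<eta>*L) * norm (w - b)^2
         \<le> norm (b - S)^2 - 2*\<eta>*inner (Fb - Fa) (b - S) + \<eta>*L*norm (b - a)^2"
proof -
  have cs: "inner (Fb - Fa) (w - b) \<le> L * norm (b - a) * norm (w - b)"
    by (metis Cauchy_Schwarz_ineq2 abs_le_D1 lip mult_right_mono norm_ge_zero order_trans)
  have am: "2 * (L * norm (b - a) * norm (w - b)) \<le> L * (norm (b - a)^2 + norm (w - b)^2)"
  proof -
    have "0 \<le> L * (norm (b - a) - norm (w - b))^2" using L by simp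
    then show ?thesis by (simp add: power2_eq_square algebra_simps)
  qed
  have e1: "inner (b - \<eta> *\<^sub>R (2 *\<^sub>R Fb - Fa) - w) (S - w)
     = inner (w - b) (w - S) + \<eta> * inner (2 *\<^sub>R Fb - Fa) (w - S)"
    by (simp add: inner_diff_left inner_diff_right inner_commute algebra_simps)
  have e2: "inner (2 *\<^sub>R Fb - Fa) (w - S) - inner FS (w - S)
      = inner (Fb - Fa) (b - S) + inner (Fb - Fa) (w - b) - inner (Fw - Fb) (w - S)"
    using mono by (simp add: inner_diff_left inner_diff_right algebra_simps)
  have e3: "2 * inner (w - b) (w - S) = norm (w - b)^2 + norm (w - S)^2 - norm (b - S)^2"
    by (simp add: power2_norm_eq_inner inner_diff_left inner_diff_right inner_commute algebra_simps)
  have "inner (w - b) (w - S) + \<eta> * (inner (2 *\<^sub>R Fb - Fa) (w - S) - inner FS (w - S)) \<le> 0"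
    using hyp e1 by (simp add: algebra_simps)
  then have "inner (w - b) (w - S) + \<eta> * (inner (Fb - Fa) (b - S) + inner (Fb - Fa) (w - b) - inner (Fw - Fb) (w - S)) \<le> 0"
    using e2 by simp
  moreover have "\<eta> * inner (Fb - Fa) (w - b) \<ge> - (\<eta> * (L * norm (b - a) * norm (w - b)))"
  proof -
    have "- inner (Fb - Fa) (w - b) \<le> L * norm (b - a) * norm (w - b)"
      by (metis Cauchy_Schwarz_ineq2 abs_le_D2 lip mult_right_mono norm_ge_zero order_trans)
    then have "\<eta> * (- inner (Fb - Fa) (w - b)) \<le> \<eta> * (L * norm (b - a) * norm (w - b))"
      using eta by (intro mult_left_mono) auto
    then show ?thesis by simp
  qed
  moreover have "\<eta> * (2 * (L * norm (b - a) * norm (w - b))) \<le> \<eta> * (L * (norm (b - a)^2 + norm (w - b)^2))"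
    using am eta by (intro mult_left_mono) auto
  ultimately show ?thesis using e3 by (simp add: algebra_simps)
qed

lemma fejer_lower:
  fixes a b S Fa Fb :: "'a::real_inner"
  assumes lip: "norm (Fb - Fa) \<le> L * norm (b - a)"
    and eta: "\<eta> > 0" and L: "L > 0"
  shows "(1 - \<eta>*L) * norm (b - S)^2 \<le> norm (b - S)^2 - 2*\<eta>*inner (Fb - Fa) (b - S) + \<eta>*L*norm (b - a)^2"
proof -
  have cs: "inner (Fb - Fa) (b - S) \<le> L * norm (b - a) * norm (b - S)"
    by (metis Cauchy_Schwarz_ineq2 abs_le_D1 lip mult_right_mono norm_ge_zero order_trans)
  have am: "2 * (L * norm (b - a) * norm (b - S)) \<le> L * (norm (b - a)^2 + norm (b - S)^2)"
  proof -
    have "0 \<le> L * (norm (b - a) - norm (b - S))^2" using L by simp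
    then show ?thesis by (simp add: power2_eq_square algebra_simps)
  qed
  have "2 * inner (Fb - Fa) (b - S) \<le> L * (norm (b - a)^2 + norm (b - S)^2)"
    using am cs by linarith
  then have "\<eta> * (2 * inner (Fb - Fa) (b - S)) \<le> \<eta> * (L * (norm (b - a)^2 + norm (b - S)^2))"
    using eta by (intro mult_left_mono) auto
  then show ?thesis by (simp add: algebra_simps)
qed

lemma fejer_seq:
  fixes P :: "nat \<Rightarrow> 'a::real_inner" and F :: "'a \<Rightarrow> 'a"
  assumes hyp: "\<And>n. inner (P (Suc n) - \<eta> *\<^sub>R (2 *\<^sub>R F (P (Suc n)) - F (P n)) - P (Suc (Suc n))) (S - P (Suc (Suc n)))
                 \<le> \<eta> * inner (F S) (P (Suc (Suc n)) - S)"
    and mono: "\<And>u. inner (F u - F S) (u - S) = 0"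
    and lip: "\<And>u v. norm (F u - F v) \<le> L * norm (u - v)"
    and eta: "\<eta> > 0" and L: "L > 0" and small: "2 * \<eta> * L < 1"
    and psi: "\<And>n. \<psi> n = norm (P (Suc n) - S)^2 - 2*\<eta>*inner (F (P (Suc n)) - F (P n)) (P (Suc n) - S)
                        + \<eta>*L*norm (P (Suc n) - P n)^2"
  shows "\<And>n. \<psi> (Suc n) + (1 - 2*\<eta>*L) * norm (P (Suc (Suc n)) - P (Suc n))^2 \<le> \<psi> n"
    and "\<And>n. (1 - \<eta>*L) * norm (P (Suc n) - S)^2 \<le> \<psi> n"
    and "\<And>n. 0 \<le> \<psi> n"
    and "decseq \<psi>"
proof -
  show 1: "\<psi> (Suc n) + (1 - 2*\<eta>*L) * norm (P (Suc (Suc n)) - P (Suc n))^2 \<le> \<psi> n" for n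
    unfolding psi by (rule fejer_step[OF hyp mono lip eta L])
  show 2: "(1 - \<eta>*L) * norm (P (Suc n) - S)^2 \<le> \<psi> n" for n
    unfolding psi by (rule fejer_lower[OF lip eta L])
  show 3: "0 \<le> \<psi> n" for n
  proof -
    have "0 < \<eta>*L" using eta L by simp
    then have "0 \<le> 1 - \<eta>*L" using small by linarith
    then have "0 \<le> (1 - \<eta>*L) * norm (P (Suc n) - S)^2" by simp
    then show ?thesis using 2[of n] by linarith
  qed
  show "decseq \<psi>"
  proof (rule decseq_SucI)
    fix n
    have "0 \<le> (1 - 2*\<eta>*L) * norm (P (Suc (Suc n)) - P (Suc n))^2" using small by simp
    then show "\<psi> (Suc n) \<le> \<psi> n" using 1[of n] by linarith
  qed
qed

lemma fejer_consequences:
  fixes P :: "nat \<Rightarrow> 'a::real_inner"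
  assumes step: "\<And>n. \<psi> (Suc n) + (1 - 2*\<eta>*L) * norm (P (Suc (Suc n)) - P (Suc n))^2 \<le> \<psi> n"
    and low: "\<And>n. (1 - \<eta>*L) * norm (P (Suc n) - S)^2 \<le> \<psi> n"
    and nn: "\<And>n. 0 \<le> \<psi> n"
    and eta: "\<eta> > 0" and L: "L > 0" and small: "2 * \<eta> * L < 1"
  shows "(\<lambda>n. P (Suc n) - P n) \<longlonglongrightarrow> 0"
    and "\<And>n. norm (P (Suc n) - S) \<le> sqrt (\<psi> 0 / (1 - \<eta>*L))"
proof -
  define d where "d n = (1 - 2*\<eta>*L) * norm (P (Suc (Suc n)) - P (Suc n))^2" for n
  have dn: "0 \<le> d n" for n unfolding d_def using small by simp
  have tele: "(\<Sum>i<n. d i) \<le> \<psi> 0 - \<psi> n" for n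
  proof (induction n)
    case 0 then show ?case by simp
  next
    case (Suc n) then show ?case using step[of n] unfolding d_def by simp
  qed
  have "summable d"
  proof (rule summableI_nonneg_bounded[where x="\<psi> 0"])
    show "0 \<le> d n" for n by (rule dn)
    show "sum d {..<n} \<le> \<psi> 0" for n using tele[of n] nn[of n] by linarith
  qed
  then have "d \<longlonglongrightarrow> 0" by (rule summable_LIMSEQ_zero)
  then have "(\<lambda>n. d n / (1 - 2*\<eta>*L)) \<longlonglongrightarrow> 0 / (1 - 2*\<eta>*L)"
    by (intro tendsto_intros) (use small in auto)
  then have "(\<lambda>n. norm (P (Suc (Suc n)) - P (Suc n))^2) \<longlonglongrightarrow> 0"
    unfolding d_def using small by simp
  then have "(\<lambda>n. sqrt (norm (P (Suc (Suc n)) - P (Suc n))^2)) \<longlonglongrightarrow> sqrt 0"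
    by (intro tendsto_intros)
  then have "(\<lambda>n. norm (P (Suc (Suc n)) - P (Suc n))) \<longlonglongrightarrow> 0" by simp
  then have "(\<lambda>n. P (Suc (Suc n)) - P (Suc n)) \<longlonglongrightarrow> 0" by (simp add: tendsto_norm_zero_iff)
  then show "(\<lambda>n. P (Suc n) - P n) \<longlonglongrightarrow> 0"
    by (rule LIMSEQ_imp_Suc)
  show "norm (P (Suc n) - S) \<le> sqrt (\<psi> 0 / (1 - \<eta>*L))" for n
  proof -
    have pos: "0 < 1 - \<eta>*L" proof -
    have "0 < \<eta>*L" using eta L by simp
    then show ?thesis using small by linarith
  qed
    have "\<psi> n \<le> \<psi> 0"
    proof (induction n)
      case (Suc n)
      have "0 \<le> (1 - 2*\<eta>*L) * norm (P (Suc (Suc n)) - P (Suc n))^2" using small by simp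
      then show ?case using Suc step[of n] by linarith
    qed simp
    with low[of n] have "(1 - \<eta>*L) * norm (P (Suc n) - S)^2 \<le> \<psi> 0" by linarith
    then have "norm (P (Suc n) - S)^2 \<le> \<psi> 0 / (1 - \<eta>*L)"
      using pos by (simp add: field_simps)
    then show ?thesis by (simp add: real_le_rsqrt)
  qed
qed

lemma fejer_limit:
  fixes P :: "nat \<Rightarrow> 'a::real_inner" and F :: "'a \<Rightarrow> 'a"
  assumes low: "\<And>n. (1 - \<eta>*L) * norm (P (Suc n) - S)^2 \<le> \<psi> n"
    and dec: "decseq \<psi>" and nn: "\<And>n. 0 \<le> \<psi> n"
    and psi: "\<And>n. \<psi> n = norm (P (Suc n) - S)^2 - 2*\<eta>*inner (F (P (Suc n)) - F (P n)) (P (Suc n) - S)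
                        + \<eta>*L*norm (P (Suc n) - P n)^2"
    and lip: "\<And>u v. norm (F u - F v) \<le> L * norm (u - v)"
    and eta: "\<eta> > 0" and L: "L > 0" and small: "2 * \<eta> * L < 1"
    and diff: "(\<lambda>n. P (Suc n) - P n) \<longlonglongrightarrow> 0"
    and r: "strict_mono r" and sub: "(\<lambda>j. P (Suc (r j))) \<longlonglongrightarrow> S"
  shows "P \<longlonglongrightarrow> S"
proof -
  obtain l where l: "\<psi> \<longlonglongrightarrow> l" using decseq_convergent[OF dec, of 0] nn by blast
  have d1: "(\<lambda>j. P (Suc (r j)) - P (r j)) \<longlonglongrightarrow> 0"
    using LIMSEQ_subseq_LIMSEQ[OF diff r] by (simp add: o_def)
  have a1: "(\<lambda>j. norm (P (Suc (r j)) - S)) \<longlonglongrightarrow> 0"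
    using sub by (simp add: LIM_zero_iff tendsto_norm_zero_iff)
  have a2: "(\<lambda>j. norm (P (Suc (r j)) - P (r j))) \<longlonglongrightarrow> 0"
    using d1 by (simp add: tendsto_norm_zero_iff)
  have bnd: "norm (\<psi> (r j)) \<le> norm (P (Suc (r j)) - S)^2 + 2*\<eta>*L* (norm (P (Suc (r j)) - P (r j)) * norm (P (Suc (r j)) - S))
       + \<eta>*L*norm (P (Suc (r j)) - P (r j))^2" for j
  proof -
    let ?b = "P (Suc (r j))" and ?a = "P (r j)"
    have "\<bar>inner (F ?b - F ?a) (?b - S)\<bar> \<le> L * norm (?b - ?a) * norm (?b - S)"
      by (metis Cauchy_Schwarz_ineq2 lip mult_right_mono norm_ge_zero order_trans)
    then have "\<bar>2*\<eta>*inner (F ?b - F ?a) (?b - S)\<bar> \<le> 2*\<eta>*(L * norm (?b - ?a) * norm (?b - S))"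
      using eta by (simp add: abs_mult)
    moreover have "0 \<le> \<eta>*L*norm (?b - ?a)^2" using eta L by simp
    moreover have "0 \<le> norm (?b - S)^2" by simp
    moreover have "2*\<eta>*(L * norm (?b - ?a) * norm (?b - S)) = 2*\<eta>*L* (norm (?b - ?a) * norm (?b - S))"
      by simp
    ultimately show ?thesis unfolding psi[of "r j"] real_norm_def abs_le_iff by linarith
  qed
  have "(\<lambda>j. norm (P (Suc (r j)) - S)^2 + 2*\<eta>*L* (norm (P (Suc (r j)) - P (r j)) * norm (P (Suc (r j)) - S))
       + \<eta>*L*norm (P (Suc (r j)) - P (r j))^2) \<longlonglongrightarrow> 0^2 + 2*\<eta>*L*(0*0) + \<eta>*L*0^2"
    by (intro tendsto_intros a1 a2)
  then have t0: "(\<lambda>j. norm (P (Suc (r j)) - S)^2 + 2*\<eta>*L* (norm (P (Suc (r j)) - P (r j)) * norm (P (Suc (r j)) - S))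
       + \<eta>*L*norm (P (Suc (r j)) - P (r j))^2) \<longlonglongrightarrow> 0" by simp
  have "(\<lambda>j. \<psi> (r j)) \<longlonglongrightarrow> 0"
    by (rule Lim_null_comparison[OF _ t0], rule always_eventually) (use bnd in blast)
  moreover have "(\<lambda>j. \<psi> (r j)) \<longlonglongrightarrow> l"
    using LIMSEQ_subseq_LIMSEQ[OF l r] by (simp add: o_def)
  ultimately have l0: "l = 0" using LIMSEQ_unique by blast
  have pos: "0 < 1 - \<eta>*L" proof -
    have "0 < \<eta>*L" using eta L by simp
    then show ?thesis using small by linarith
  qed
  have "(\<lambda>n. \<psi> n / (1 - \<eta>*L)) \<longlonglongrightarrow> 0 / (1 - \<eta>*L)"
    using l l0 pos by (intro tendsto_intros) auto
  then have t: "(\<lambda>n. \<psi> n / (1 - \<eta>*L)) \<longlonglongrightarrow> 0" by simp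
  have "(\<lambda>n. norm (P (Suc n) - S)^2) \<longlonglongrightarrow> 0"
  proof (rule Lim_null_comparison[OF _ t])
    have "norm (norm (P (Suc n) - S)^2) \<le> \<psi> n / (1 - \<eta>*L)" for n
      using low[of n] pos by (simp add: pos_le_divide_eq mult.commute)
    then show "\<forall>\<^sub>F n in sequentially. norm (norm (P (Suc n) - S)^2) \<le> \<psi> n / (1 - \<eta>*L)"
      by (simp add: always_eventually)
  qed
  then have "(\<lambda>n. sqrt (norm (P (Suc n) - S)^2)) \<longlonglongrightarrow> sqrt 0" by (intro tendsto_intros)
  then have "(\<lambda>n. P (Suc n) - S) \<longlonglongrightarrow> 0" by (simp add: tendsto_norm_zero_iff)
  then have "(\<lambda>n. P (Suc n)) \<longlonglongrightarrow> S" by (simp add: LIM_zero_iff)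
  then show ?thesis by (rule LIMSEQ_imp_Suc)
qed

lemma small_t:
  fixes X K :: real
  assumes K: "K \<ge> 0" and h: "\<And>t. 0 < t \<Longrightarrow> t \<le> 1 \<Longrightarrow> X \<le> t * K"
  shows "X \<le> 0"
proof (rule ccontr)
  assume "\<not> X \<le> 0" then have X: "X > 0" by simp
  define t where "t = min 1 (X / (2 * (K + 1)))"
  have t0: "0 < t" using X K by (simp add: t_def)
  have t1: "t \<le> 1" by (simp add: t_def)
  have "t * K \<le> X / (2 * (K + 1)) * K"
    using K by (intro mult_right_mono) (auto simp: t_def)
  also have "\<dots> < X"
  proof -
    have "X * K < X * (2 * (K + 1))" using X K by (intro mult_strict_left_mono) auto
    then show ?thesis using K by (simp add: field_simps)
  qed
  finally show False using h[OF t0 t1] by simp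
qed

lemma prox_vi:
  fixes h :: "'a::real_inner \<Rightarrow> ereal"
  assumes prp: "proper_fun h" and cv: "ext_convex h" and eta: "\<eta> > 0"
    and am: "is_arg_min (\<lambda>u. ereal \<eta> * h u + ereal ((norm (u - v))\<^sup>2 / 2)) (\<lambda>_. True) p"
  shows "h p = ereal (real_of_ereal (h p))"
    and "\<And>u b. h u = ereal b \<Longrightarrow> \<eta> * real_of_ereal (h p) + inner (v - p) (u - p) \<le> \<eta> * b"
proof -
  have min: "ereal \<eta> * h p + ereal ((norm (p - v))\<^sup>2 / 2) \<le> ereal \<eta> * h q + ereal ((norm (q - v))\<^sup>2 / 2)" for q
    using am unfolding is_arg_min_linorder by blast
  have ninf: "h q \<noteq> -\<infinity>" for q using prp unfolding proper_fun_def by blast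
  obtain u0 where u0: "h u0 \<noteq> \<infinity>" using prp unfolding proper_fun_def by blast
  then obtain b0 where b0: "h u0 = ereal b0" using ninf[of u0] by (cases "h u0") auto
  have "h p \<noteq> \<infinity>"
  proof
    assume "h p = \<infinity>"
    then have "ereal \<eta> * h p + ereal ((norm (p - v))\<^sup>2 / 2) = \<infinity>" using eta by simp
    with min[of u0] b0 show False by simp
  qed
  then obtain a where a: "h p = ereal a" using ninf[of p] by (cases "h p") auto
  then show "h p = ereal (real_of_ereal (h p))" by simp
  fix u b assume hb: "h u = ereal b"
  define X where "X = \<eta> * a + inner (v - p) (u - p) - \<eta> * b"
  define K where "K = (norm (u - p))\<^sup>2 / 2"
  have "X \<le> 0"
  proof (rule small_t[of K])
    show "0 \<le> K" by (simp add: K_def)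
    fix t :: real assume t: "0 < t" "t \<le> 1"
    define ut where "ut = (1 - t) *\<^sub>R p + t *\<^sub>R u"
    have "h ut \<le> ereal (1 - t) * h p + ereal t * h u"
      using cv t unfolding ext_convex_def ut_def by auto
    then have hut: "h ut \<le> ereal ((1 - t) * a + t * b)" using a hb by simp
    have "ereal (\<eta> * a + (norm (p - v))\<^sup>2 / 2) = ereal \<eta> * h p + ereal ((norm (p - v))\<^sup>2 / 2)"
      using a by simp
    also have "\<dots> \<le> ereal \<eta> * h ut + ereal ((norm (ut - v))\<^sup>2 / 2)" by (rule min)
    also have "\<dots> \<le> ereal \<eta> * ereal ((1 - t) * a + t * b) + ereal ((norm (ut - v))\<^sup>2 / 2)"
      using hut eta by (intro add_right_mono ereal_mult_left_mono) auto
    finally have r: "\<eta> * a + (norm (p - v))\<^sup>2 / 2 \<le> \<eta> * ((1 - t) * a + t * b) + (norm (ut - v))\<^sup>2 / 2"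
      by simp
    have e: "ut - v = (p - v) + t *\<^sub>R (u - p)" by (simp add: ut_def algebra_simps)
    have "(norm ((p - v) + t *\<^sub>R (u - p)))\<^sup>2 = (norm (p - v))\<^sup>2 + 2 * t * inner (p - v) (u - p) + t * t * (norm (u - p))\<^sup>2"
      by (simp add: power2_norm_eq_inner inner_add_left inner_add_right inner_commute algebra_simps)
    then have eq: "(norm (ut - v))\<^sup>2 = (norm (p - v))\<^sup>2 + 2 * t * inner (p - v) (u - p) + t * t * (norm (u - p))\<^sup>2"
      by (simp only: e)
    have e1: "\<eta> * ((1 - t) * a + t * b) = \<eta> * a - t * (\<eta> * a) + t * (\<eta> * b)"
      by (simp add: algebra_simps)
    have e2: "t * t * (norm (u - p))\<^sup>2 / 2 = t * (t * K)" by (simp add: K_def)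
    have e3: "t * (\<eta> * b + inner (p - v) (u - p)) = t * (\<eta> * b) + t * inner (p - v) (u - p)"
      by (simp add: algebra_simps)
    have "t * (\<eta> * a) \<le> t * (\<eta> * b + inner (p - v) (u - p)) + t * (t * K)"
      using r eq e1 e2 e3 by linarith
    then have "\<eta> * a \<le> \<eta> * b + inner (p - v) (u - p) + t * K"
      using t by (simp add: distrib_left[symmetric])
    moreover have "inner (v - p) (u - p) = - inner (p - v) (u - p)"
      by (simp add: inner_diff_left)
    ultimately show "X \<le> t * K" unfolding X_def by linarith
  qed
  then show "\<eta> * real_of_ereal (h p) + inner (v - p) (u - p) \<le> \<eta> * b"
    using a by (simp add: X_def)
qed

lemma vi_limit:
  fixes h :: "'a::real_inner \<Rightarrow> ereal"
  assumes cl: "closed_fun h" and prp: "proper_fun h" and eta: "\<eta> > 0"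
    and p: "p \<longlonglongrightarrow> ps" and v: "v \<longlonglongrightarrow> vs"
    and fin: "\<And>j. h (p j) = ereal (a j)"
    and vi: "\<And>j u b. h u = ereal b \<Longrightarrow> \<eta> * a j + inner (v j - p j) (u - p j) \<le> \<eta> * b"
  shows "h ps \<le> h u + ereal (- inner (vs - ps) (u - ps) / \<eta>)"
proof (cases "h u = \<infinity>")
  case True then show ?thesis by simp
next
  case False
  then obtain b where b: "h u = ereal b" using prp unfolding proper_fun_def
    by (cases "h u") auto
  define R where "R j = b - inner (v j - p j) (u - p j) / \<eta>" for j
  have "a j \<le> R j" for j
    using vi[OF b, of j] eta by (simp add: R_def field_simps)
  then have mem: "(p j, R j) \<in> {(x, r::real). h x \<le> ereal r}" for j using fin[of j] by simp
  have "(\<lambda>j. (p j, R j)) \<longlonglongrightarrow> (ps, b - inner (vs - ps) (u - ps) / \<eta>)"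
    unfolding R_def using eta by (intro tendsto_intros p v) auto
  from closed_sequentially[OF cl[unfolded closed_fun_def] mem this]
  have "h ps \<le> ereal (b - inner (vs - ps) (u - ps) / \<eta>)" by simp
  then show ?thesis using b eta by simp
qed

lemma tr: "(x::real^'n) \<bullet> ((y::real^'p) v* A) = y \<bullet> ((A::real^'n^'p) *v x)"
  by (metis dot_lmul_matrix inner_commute)
lemma M0_lin: "linear (M0_map A B)"
  unfolding M0_map_def
  by (rule linearI) (auto simp: matrix_vector_right_distrib matrix_vector_mult_scaleR scaleR_vector_matrix_assoc algebra_simps)
lemma M0_bl: "bounded_linear (M0_map A B)"
  using M0_lin linear_conv_bounded_linear by blast
lemma M0_skew: "inner (M0_map A B w) w = 0"
  unfolding M0_map_def by (cases w) (auto simp: tr inner_diff_left inner_diff_right inner_minus_right inner_commute)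
lemma vm_bl: "bounded_linear (\<lambda>y::real^'p. y v* (A::real^'n^'p))"
proof -
  have "linear (\<lambda>y::real^'p. y v* A)"
    by (rule linearI) (auto simp: vector_matrix_left_distrib scaleR_vector_matrix_assoc)
  then show ?thesis using linear_conv_bounded_linear by blast
qed

lemma saddle_sol:
  fixes f :: "real^'n \<Rightarrow> ereal" and g :: "real^'m \<Rightarrow> ereal"
    and A :: "real^'n^'p" and B :: "real^'m^'p" and c :: "real^'p"
  assumes pf: "proper_fun f" and pg: "proper_fun g"
    and saddle: "has_saddle_point (\<lambda>(u, r) w. lagrangian0 f g A B c u r w)"
  shows "\<exists>xs zs ys. A *v xs + B *v zs = c \<and> (\<forall>u. f xs \<le> f u + ereal (inner (ys v* A) (u - xs)))
            \<and> (\<forall>r. g zs \<le> g r + ereal (inner (ys v* B) (r - zs)))"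
proof -
  obtain w0 y0 where H: "\<And>w y. (\<lambda>(u, r) w. lagrangian0 f g A B c u r w) w0 y \<le> (\<lambda>(u, r) w. lagrangian0 f g A B c u r w) w0 y0
      \<and> (\<lambda>(u, r) w. lagrangian0 f g A B c u r w) w0 y0 \<le> (\<lambda>(u, r) w. lagrangian0 f g A B c u r w) w y0"
    using saddle unfolding has_saddle_point_def by blast
  obtain x0 z0 where w0: "w0 = (x0, z0)" by (cases w0)
  have H1: "f x0 + g z0 + ereal (y \<bullet> (A *v x0 + B *v z0 - c)) \<le> f x0 + g z0 + ereal (y0 \<bullet> (A *v x0 + B *v z0 - c))" for y
    using H[where w=w0 and y=y] unfolding w0 lagrangian0_def by simp
  have H2: "f x0 + g z0 + ereal (y0 \<bullet> (A *v x0 + B *v z0 - c)) \<le> f u + g r + ereal (y0 \<bullet> (A *v u + B *v r - c))" for u r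
    using H[where w="(u, r)" and y=y0] unfolding w0 lagrangian0_def by simp
  have nf: "f q \<noteq> -\<infinity>" for q using pf unfolding proper_fun_def by blast
  have ng: "g q \<noteq> -\<infinity>" for q using pg unfolding proper_fun_def by blast
  obtain u1 where u1: "f u1 \<noteq> \<infinity>" using pf unfolding proper_fun_def by blast
  obtain r1 where r1: "g r1 \<noteq> \<infinity>" using pg unfolding proper_fun_def by blast
  obtain a1 where a1: "f u1 = ereal a1" using u1 nf[of u1] by (cases "f u1") auto
  obtain b1 where b1: "g r1 = ereal b1" using r1 ng[of r1] by (cases "g r1") auto
  have fin: "f x0 \<noteq> \<infinity> \<and> g z0 \<noteq> \<infinity>"
  proof (rule ccontr)
    assume "\<not> (f x0 \<noteq> \<infinity> \<and> g z0 \<noteq> \<infinity>)"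
    then have "f x0 + g z0 + ereal (y0 \<bullet> (A *v x0 + B *v z0 - c)) = \<infinity>"
      using nf[of x0] ng[of z0] by auto
    with H2[of u1 r1] a1 b1 show False by simp
  qed
  obtain a0 where a0: "f x0 = ereal a0" using fin nf[of x0] by (cases "f x0") auto
  obtain b0 where b0: "g z0 = ereal b0" using fin ng[of z0] by (cases "g z0") auto
  define res where "res = A *v x0 + B *v z0 - c"
  have "(y0 + res) \<bullet> res \<le> y0 \<bullet> res" using H1[of "y0 + res"] a0 b0 unfolding res_def by simp
  then have "res \<bullet> res \<le> 0" by (simp add: inner_add_left)
  then have "res = 0" by (metis inner_eq_zero_iff inner_ge_zero order_antisym)
  then have feas: "A *v x0 + B *v z0 = c" unfolding res_def by simp
  have fpart: "f x0 \<le> f u + ereal (inner (y0 v* A) (u - x0))" for u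
  proof (cases "f u")
    case (real a)
    have "y0 \<bullet> (A *v u + B *v z0 - c) = inner (y0 v* A) (u - x0)"
    proof -
      have "A *v u + B *v z0 - c = A *v (u - x0)" using feas by (simp add: matrix_vector_mult_diff_distrib algebra_simps)
      then show ?thesis by (simp add: dot_lmul_matrix)
    qed
    then show ?thesis using H2[of u z0] a0 b0 real feas by simp
  qed (use nf in auto)
  have gpart: "g z0 \<le> g r + ereal (inner (y0 v* B) (r - z0))" for r
  proof (cases "g r")
    case (real b)
    have "y0 \<bullet> (A *v x0 + B *v r - c) = inner (y0 v* B) (r - z0)"
    proof -
      have "A *v x0 + B *v r - c = B *v (r - z0)" using feas by (simp add: matrix_vector_mult_diff_distrib algebra_simps)
      then show ?thesis by (simp add: dot_lmul_matrix)
    qed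
    then show ?thesis using H2[of x0 r] a0 b0 real feas by simp
  qed (use ng in auto)
  show ?thesis using feas fpart gpart by blast
qed

lemma comp_ineq:
  fixes h :: "'a::real_inner \<Rightarrow> ereal"
  assumes "h xs = ereal as" "h xs \<le> h p + ereal (inner q (p - xs))" "h p = ereal ap"
    "\<eta> * ap + inner (v - p) (xs - p) \<le> \<eta> * as" "\<eta> > 0"
  shows "inner (v - p) (xs - p) \<le> \<eta> * inner q (p - xs)"
proof -
  have "as \<le> ap + inner q (p - xs)" using assms(1-3) by simp
  then have "\<eta> * as \<le> \<eta> * (ap + inner q (p - xs))" using assms(5) by (intro mult_left_mono) auto
  then show ?thesis using assms(4) by (simp add: algebra_simps)
qed

theorem corollary1:
  fixes f :: "real^'n \<Rightarrow> ereal" and g :: "real^'m \<Rightarrow> ereal"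
    and A :: "real^'n^'p" and B :: "real^'m^'p" and c :: "real^'p"
    and L \<eta> :: real
    and x :: "int \<Rightarrow> real^'n" and z :: "int \<Rightarrow> real^'m" and y :: "int \<Rightarrow> real^'p"
  assumes f: "proper_fun f" "ext_convex f" "closed_fun f"
    and g: "proper_fun g" "ext_convex g" "closed_fun g"
    and saddle: "has_saddle_point (\<lambda>(u, r) w. lagrangian0 f g A B c u r w)"
    and L: "L > 0" "onorm (M0_map A B) \<le> L"
    and eta: "0 < \<eta>" "\<eta> < 1 / (2 * L)"
    and x_step: "\<And>k::int. k \<ge> 0 \<Longrightarrow>
       is_arg_min (\<lambda>u. ereal \<eta> * f u + ereal ((norm (u - (x k - (2 * \<eta>) *\<^sub>R (transpose A *v y k)
            + \<eta> *\<^sub>R (transpose A *v y (k - 1)))))\<^sup>2 / 2)) (\<lambda>_. True) (x (k + 1))"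
    and z_step: "\<And>k::int. k \<ge> 0 \<Longrightarrow>
       is_arg_min (\<lambda>r. ereal \<eta> * g r + ereal ((norm (r - (z k - (2 * \<eta>) *\<^sub>R (transpose B *v y k)
            + \<eta> *\<^sub>R (transpose B *v y (k - 1)))))\<^sup>2 / 2)) (\<lambda>_. True) (z (k + 1))"
    and y_step: "\<And>k::int. k \<ge> 0 \<Longrightarrow>
       y (k + 1) = y k + (2 * \<eta>) *\<^sub>R (A *v x k) + (2 * \<eta>) *\<^sub>R (B *v z k)
                   - \<eta> *\<^sub>R (A *v x (k - 1)) - \<eta> *\<^sub>R (B *v z (k - 1)) - \<eta> *\<^sub>R c"
  shows "\<exists>xs zs. (\<lambda>k::nat. x (int k)) \<longlonglongrightarrow> xs \<and> (\<lambda>k::nat. z (int k)) \<longlonglongrightarrow> zs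
     \<and> A *v xs + B *v zs = c
     \<and> (\<forall>u r. A *v u + B *v r = c \<longrightarrow> f xs + g zs \<le> f u + g r)"
proof -
  define W where "W k = (x k, z k, y k)" for k
  define F where "F w = M0_map A B w + (0, 0, c)" for w
  define P where "P n = W (int n - 1)" for n :: nat
  define xh where "xh k = x k - (2 * \<eta>) *\<^sub>R (transpose A *v y k) + \<eta> *\<^sub>R (transpose A *v y (k - 1))" for k
  define zh where "zh k = z k - (2 * \<eta>) *\<^sub>R (transpose B *v y k) + \<eta> *\<^sub>R (transpose B *v y (k - 1))" for k
  define sol where "sol xs zs ys \<longleftrightarrow> A *v xs + B *v zs = c \<and> (\<forall>u. f xs \<le> f u + ereal (inner (ys v* A) (u - xs)))
            \<and> (\<forall>r. g zs \<le> g r + ereal (inner (ys v* B) (r - zs)))" for xs zs ys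
  have Fexp: "F (a, b, d) = (d v* A, d v* B, - (A *v a) - B *v b + c)" for a b d
    by (simp add: F_def M0_map_def)
  have lipF: "norm (F u - F v) \<le> L * norm (u - v)" for u v
  proof -
    have "F u - F v = M0_map A B (u - v)" by (simp add: F_def linear_diff[OF M0_lin])
    then have "norm (F u - F v) \<le> onorm (M0_map A B) * norm (u - v)" using onorm[OF M0_bl] by simp
    also have "\<dots> \<le> L * norm (u - v)" using L(2) by (intro mult_right_mono) auto
    finally show ?thesis .
  qed
  have monoF: "inner (F u - F v) (u - v) = 0" for u v
  proof -
    have "F u - F v = M0_map A B (u - v)" by (simp add: F_def linear_diff[OF M0_lin])
    then show ?thesis using M0_skew by simp
  qed
  have small: "2 * \<eta> * L < 1"
    using eta(2) L(1) by (simp add: pos_less_divide_eq mult.commute mult.left_commute)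
  have xprox: "is_arg_min (\<lambda>u. ereal \<eta> * f u + ereal ((norm (u - xh k))\<^sup>2 / 2)) (\<lambda>_. True) (x (k + 1))"
    if "k \<ge> 0" for k unfolding xh_def by (rule x_step[OF that])
  have zprox: "is_arg_min (\<lambda>r. ereal \<eta> * g r + ereal ((norm (r - zh k))\<^sup>2 / 2)) (\<lambda>_. True) (z (k + 1))"
    if "k \<ge> 0" for k unfolding zh_def by (rule z_step[OF that])
  note xfin = prox_vi(1)[OF f(1) f(2) eta(1) xprox]
  note xvi = prox_vi(2)[OF f(1) f(2) eta(1) xprox]
  note zfin = prox_vi(1)[OF g(1) g(2) eta(1) zprox]
  note zvi = prox_vi(2)[OF g(1) g(2) eta(1) zprox]
  have Pidx: "P (Suc n) = W (int n)" "P (Suc (Suc n)) = W (int n + 1)" for n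
    by (simp_all add: P_def algebra_simps)
  have vec: "P (Suc n) - \<eta> *\<^sub>R (2 *\<^sub>R F (P (Suc n)) - F (P n)) = (xh (int n), zh (int n), y (int n + 1))" for n
  proof -
    have e: "y (int n + 1) = y (int n) + (2 * \<eta>) *\<^sub>R (A *v x (int n)) + (2 * \<eta>) *\<^sub>R (B *v z (int n))
                   - \<eta> *\<^sub>R (A *v x (int n - 1)) - \<eta> *\<^sub>R (B *v z (int n - 1)) - \<eta> *\<^sub>R c"
      by (rule y_step) simp
    show ?thesis unfolding e by (simp add: Pidx P_def W_def Fexp xh_def zh_def algebra_simps) (simp add: vec_eq_iff)
  qed
  have hyp: "inner (P (Suc n) - \<eta> *\<^sub>R (2 *\<^sub>R F (P (Suc n)) - F (P n)) - P (Suc (Suc n))) ((xs, zs, ys) - P (Suc (Suc n)))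
      \<le> \<eta> * inner (F (xs, zs, ys)) (P (Suc (Suc n)) - (xs, zs, ys))"
    if S: "sol xs zs ys" for xs zs ys n
  proof -
    define k where "k = int n"
    have k: "k \<ge> 0" by (simp add: k_def)
    have feas: "A *v xs + B *v zs = c" and sf: "\<And>u. f xs \<le> f u + ereal (inner (ys v* A) (u - xs))"
      and sg: "\<And>r. g zs \<le> g r + ereal (inner (ys v* B) (r - zs))" using S unfolding sol_def by blast+
    have "f xs \<noteq> \<infinity>" using sf[of "x (k+1)"] xfin[OF k] by (metis PInfty_neq_ereal(1) ereal_infty_less_eq(1) plus_ereal.simps(1))
    then obtain as where as: "f xs = ereal as" using f(1) unfolding proper_fun_def by (cases "f xs") auto
    have "g zs \<noteq> \<infinity>" using sg[of "z (k+1)"] zfin[OF k] by (metis PInfty_neq_ereal(1) ereal_infty_less_eq(1) plus_ereal.simps(1))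
    then obtain bs where bs: "g zs = ereal bs" using g(1) unfolding proper_fun_def by (cases "g zs") auto
    have cx: "inner (xh k - x (k+1)) (xs - x (k+1)) \<le> \<eta> * inner (ys v* A) (x (k+1) - xs)"
      by (rule comp_ineq[OF as sf xfin[OF k] xvi[OF k as] eta(1)])
    have cz: "inner (zh k - z (k+1)) (zs - z (k+1)) \<le> \<eta> * inner (ys v* B) (z (k+1) - zs)"
      by (rule comp_ineq[OF bs sg zfin[OF k] zvi[OF k bs] eta(1)])
    have FS: "F (xs, zs, ys) = (ys v* A, ys v* B, 0)" unfolding Fexp feas[symmetric] by (simp add: algebra_simps)
    show ?thesis unfolding vec FS using cx cz
      by (simp add: Pidx W_def k_def[symmetric] distrib_left add.commute)
  qed
  obtain xs0 zs0 ys0 where sol0: "sol xs0 zs0 ys0"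
    using saddle_sol[OF f(1) g(1) saddle] unfolding sol_def by blast
  define S0 where "S0 = (xs0, zs0, ys0)"
  define \<psi>0 where "\<psi>0 n = norm (P (Suc n) - S0)^2 - 2*\<eta>*inner (F (P (Suc n)) - F (P n)) (P (Suc n) - S0)
                        + \<eta>*L*norm (P (Suc n) - P n)^2" for n
  note fs0 = fejer_seq[where P=P and F=F and S=S0 and \<eta>=\<eta> and L=L and \<psi>=\<psi>0, OF hyp[OF sol0, folded S0_def] monoF lipF eta(1) L(1) small \<psi>0_def]
  note fc0 = fejer_consequences[where P=P and S=S0 and \<eta>=\<eta> and L=L and \<psi>=\<psi>0, OF fs0(1) fs0(2) fs0(3) eta(1) L(1) small]
  have D: "(\<lambda>n. P (Suc n) - P n) \<longlonglongrightarrow> 0" by (rule fc0(1))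
  have "bounded (range (\<lambda>n. P (Suc n)))"
  proof (rule bounded_subset[OF bounded_cball[of S0 "sqrt (\<psi>0 0 / (1 - \<eta>*L))"]])
    show "range (\<lambda>n. P (Suc n)) \<subseteq> cball S0 (sqrt (\<psi>0 0 / (1 - \<eta> * L)))"
      using fc0(2) by (auto simp: dist_norm norm_minus_commute)
  qed
  then obtain S' r where r: "strict_mono r" and sub: "((\<lambda>n. P (Suc n)) \<circ> r) \<longlonglongrightarrow> S'"
    using bounded_imp_convergent_subsequence by blast
  have sub': "(\<lambda>j. P (Suc (r j))) \<longlonglongrightarrow> S'" using sub by (simp add: o_def)
  obtain xs zs ys where S': "S' = (xs, zs, ys)" by (metis prod_cases3)
  have D1: "(\<lambda>j. P (Suc (r j)) - P (r j)) \<longlonglongrightarrow> 0"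
    using LIMSEQ_subseq_LIMSEQ[OF D r] by (simp add: o_def)
  have D2: "(\<lambda>j. P (Suc (Suc (r j))) - P (Suc (r j))) \<longlonglongrightarrow> 0"
    using LIMSEQ_subseq_LIMSEQ[OF LIMSEQ_Suc[OF D] r] by (simp add: o_def)
  have T0: "(\<lambda>j. P (r j)) \<longlonglongrightarrow> S'"
    using tendsto_diff[OF sub' D1] by simp
  have T2: "(\<lambda>j. P (Suc (Suc (r j)))) \<longlonglongrightarrow> S'"
    using tendsto_add[OF sub' D2] by simp
  have cx1: "(\<lambda>j. x (int (r j))) \<longlonglongrightarrow> xs" using tendsto_fst[OF sub'] by (simp add: Pidx W_def S')
  have cz1: "(\<lambda>j. z (int (r j))) \<longlonglongrightarrow> zs" using tendsto_fst[OF tendsto_snd[OF sub']] by (simp add: Pidx W_def S')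
  have cy1: "(\<lambda>j. y (int (r j))) \<longlonglongrightarrow> ys" using tendsto_snd[OF tendsto_snd[OF sub']] by (simp add: Pidx W_def S')
  have cx0: "(\<lambda>j. x (int (r j) - 1)) \<longlonglongrightarrow> xs" using tendsto_fst[OF T0] by (simp add: P_def W_def S')
  have cz0: "(\<lambda>j. z (int (r j) - 1)) \<longlonglongrightarrow> zs" using tendsto_fst[OF tendsto_snd[OF T0]] by (simp add: P_def W_def S')
  have cy0: "(\<lambda>j. y (int (r j) - 1)) \<longlonglongrightarrow> ys" using tendsto_snd[OF tendsto_snd[OF T0]] by (simp add: P_def W_def S')
  have cx2: "(\<lambda>j. x (int (r j) + 1)) \<longlonglongrightarrow> xs" using tendsto_fst[OF T2] by (simp add: Pidx W_def S' add.commute)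
  have cz2: "(\<lambda>j. z (int (r j) + 1)) \<longlonglongrightarrow> zs" using tendsto_fst[OF tendsto_snd[OF T2]] by (simp add: Pidx W_def S' add.commute)
  have cy2: "(\<lambda>j. y (int (r j) + 1)) \<longlonglongrightarrow> ys" using tendsto_snd[OF tendsto_snd[OF T2]] by (simp add: Pidx W_def S' add.commute)
  note blA = bounded_linear.tendsto[OF matrix_vector_mul_bounded_linear[of A]]
  note blB = bounded_linear.tendsto[OF matrix_vector_mul_bounded_linear[of B]]
  note blAt = bounded_linear.tendsto[OF matrix_vector_mul_bounded_linear[of "transpose A"]]
  note blBt = bounded_linear.tendsto[OF matrix_vector_mul_bounded_linear[of "transpose B"]]
  have yeq: "(\<lambda>j. y (int (r j) + 1)) = (\<lambda>j. y (int (r j)) + (2 * \<eta>) *\<^sub>R (A *v x (int (r j))) + (2 * \<eta>) *\<^sub>R (B *v z (int (r j)))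
                   - \<eta> *\<^sub>R (A *v x (int (r j) - 1)) - \<eta> *\<^sub>R (B *v z (int (r j) - 1)) - \<eta> *\<^sub>R c)"
    using y_step by auto
  have "(\<lambda>j. y (int (r j) + 1)) \<longlonglongrightarrow> ys + (2 * \<eta>) *\<^sub>R (A *v xs) + (2 * \<eta>) *\<^sub>R (B *v zs)
                   - \<eta> *\<^sub>R (A *v xs) - \<eta> *\<^sub>R (B *v zs) - \<eta> *\<^sub>R c"
    unfolding yeq by (intro tendsto_intros cy1 blA blB cx1 cz1 cx0 cz0)
  from LIMSEQ_unique[OF cy2 this]
  have E: "ys = ys + (2 * \<eta>) *\<^sub>R (A *v xs) + (2 * \<eta>) *\<^sub>R (B *v zs)
                   - \<eta> *\<^sub>R (A *v xs) - \<eta> *\<^sub>R (B *v zs) - \<eta> *\<^sub>R c" .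
  have "(A *v xs + B *v zs - c) $ i = 0" for i
  proof -
    have "ys $ i = ys $ i + (2 * \<eta>) * (A *v xs) $ i + (2 * \<eta>) * (B *v zs) $ i
                   - \<eta> * (A *v xs) $ i - \<eta> * (B *v zs) $ i - \<eta> * c $ i"
      using arg_cong[OF E, of "\<lambda>v. v $ i"] by simp
    then have "\<eta> * ((A *v xs) $ i + (B *v zs) $ i - c $ i) = 0" by (simp add: algebra_simps)
    then show ?thesis using eta(1) by simp
  qed
  then have feas: "A *v xs + B *v zs = c" by (simp add: vec_eq_iff)
  have xhl: "(\<lambda>j. xh (int (r j))) \<longlonglongrightarrow> xs - \<eta> *\<^sub>R (ys v* A)"
  proof -
    have "(\<lambda>j. xh (int (r j))) \<longlonglongrightarrow> xs - (2 * \<eta>) *\<^sub>R (transpose A *v ys) + \<eta> *\<^sub>R (transpose A *v ys)"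
      unfolding xh_def by (intro tendsto_intros cx1 blAt cy1 cy0)
    moreover have "xs - (2 * \<eta>) *\<^sub>R (transpose A *v ys) + \<eta> *\<^sub>R (transpose A *v ys) = xs - \<eta> *\<^sub>R (ys v* A)"
      by (simp add: algebra_simps) (simp add: vec_eq_iff)
    ultimately show ?thesis by (simp only:)
  qed
  have zhl: "(\<lambda>j. zh (int (r j))) \<longlonglongrightarrow> zs - \<eta> *\<^sub>R (ys v* B)"
  proof -
    have "(\<lambda>j. zh (int (r j))) \<longlonglongrightarrow> zs - (2 * \<eta>) *\<^sub>R (transpose B *v ys) + \<eta> *\<^sub>R (transpose B *v ys)"
      unfolding zh_def by (intro tendsto_intros cz1 blBt cy1 cy0)
    moreover have "zs - (2 * \<eta>) *\<^sub>R (transpose B *v ys) + \<eta> *\<^sub>R (transpose B *v ys) = zs - \<eta> *\<^sub>R (ys v* B)"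
      by (simp add: algebra_simps) (simp add: vec_eq_iff)
    ultimately show ?thesis by (simp only:)
  qed
  have solS': "sol xs zs ys"
    unfolding sol_def
  proof (intro conjI allI feas)
    fix u
    have k: "int (r j) \<ge> 0" for j by simp
    have "f xs \<le> f u + ereal (- inner ((xs - \<eta> *\<^sub>R (ys v* A)) - xs) (u - xs) / \<eta>)"
      by (rule vi_limit[OF f(3) f(1) eta(1) cx2 xhl xfin[OF k] xvi[OF k]])
    moreover have "- inner ((xs - \<eta> *\<^sub>R (ys v* A)) - xs) (u - xs) / \<eta> = inner (ys v* A) (u - xs)"
      using eta(1) by simp
    ultimately show "f xs \<le> f u + ereal (inner (ys v* A) (u - xs))" by simp
  next
    fix u
    have k: "int (r j) \<ge> 0" for j by simp
    have "g zs \<le> g u + ereal (- inner ((zs - \<eta> *\<^sub>R (ys v* B)) - zs) (u - zs) / \<eta>)"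
      by (rule vi_limit[OF g(3) g(1) eta(1) cz2 zhl zfin[OF k] zvi[OF k]])
    moreover have "- inner ((zs - \<eta> *\<^sub>R (ys v* B)) - zs) (u - zs) / \<eta> = inner (ys v* B) (u - zs)"
      using eta(1) by simp
    ultimately show "g zs \<le> g u + ereal (inner (ys v* B) (u - zs))" by simp
  qed
  define \<psi>1 where "\<psi>1 n = norm (P (Suc n) - S')^2 - 2*\<eta>*inner (F (P (Suc n)) - F (P n)) (P (Suc n) - S')
                        + \<eta>*L*norm (P (Suc n) - P n)^2" for n
  note fs1 = fejer_seq[where P=P and F=F and S=S' and \<eta>=\<eta> and L=L and \<psi>=\<psi>1, OF hyp[OF solS', folded S'] monoF lipF eta(1) L(1) small \<psi>1_def]
  have conv: "P \<longlonglongrightarrow> S'"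
    by (rule fejer_limit[where P=P and F=F and S=S' and \<eta>=\<eta> and L=L and \<psi>=\<psi>1, OF fs1(2) fs1(4) fs1(3) \<psi>1_def lipF eta(1) L(1) small D r sub'])
  have "(\<lambda>k. W (int k)) \<longlonglongrightarrow> S'" using LIMSEQ_Suc[OF conv] by (simp add: Pidx)
  then have xc: "(\<lambda>k. x (int k)) \<longlonglongrightarrow> xs" and zc: "(\<lambda>k. z (int k)) \<longlonglongrightarrow> zs"
    using tendsto_fst tendsto_snd unfolding W_def S' by fastforce+
  have opt: "f xs + g zs \<le> f u + g r" if ur: "A *v u + B *v r = c" for u r
  proof -
    define \<alpha> where "\<alpha> = inner (ys v* A) (u - xs)"
    define \<beta> where "\<beta> = inner (ys v* B) (r - zs)"
    have ab: "\<alpha> + \<beta> = 0"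
    proof -
      have "A *v (u - xs) + B *v (r - zs) = 0"
        using ur feas by (simp add: matrix_vector_mult_diff_distrib algebra_simps)
      then have "inner ys (A *v (u - xs) + B *v (r - zs)) = 0" by simp
      then show ?thesis unfolding \<alpha>_def \<beta>_def by (simp add: dot_lmul_matrix inner_add_right)
    qed
    have "f xs + g zs \<le> (f u + ereal \<alpha>) + (g r + ereal \<beta>)"
      using solS' unfolding sol_def \<alpha>_def \<beta>_def by (intro add_mono) auto
    also have "\<dots> = (f u + g r) + (ereal \<alpha> + ereal \<beta>)"
      by (metis add.assoc add.left_commute)
    also have "ereal \<alpha> + ereal \<beta> = 0" using ab by simp
    finally show ?thesis by simp
  qed
  show ?thesis using xc zc feas opt by blast
qed
end
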